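(* Let $S$ be an infinite set and $\mathcal{F}\subseteq 2^S$ countable, nontrivial, and closed under finite unions and finite intersections. Let $\mathbf{A}=(A_1,\dots,A_k)$ be a classification problem with $k\ge 2$, and let $C\subseteq S\setminus(A_1\cup\dots\cup A_k)$ be $\mathcal{F}$-cohesive with $(C,A_i)\notin\mathit{class}_2(\mathcal{F})$ for $1\le i\le k$. Then there exists $\mathbf{B}\le\mathbf{A}$ with $|\mathbf{B}|=k$ and $\mathbf{B}\in\mathit{core}_k(\mathcal{F})$.
   Context: $\mathcal{F}$ is nontrivial if $\emptyset,S\in\mathcal{F}$ and for all $Q\in\mathcal{F}$ and finite $E\subseteq S$ both $Q\cup E\in\mathcal{F}$ and $Q\setminus E\in\mathcal{F}$. A classification problem is a vector $(A_1,\dots,A_k)$, $k\ge1$, of pairwise disjoint infinite subsets of $S$, of length $k$. For vectors $\mathbf{B}=(B_1,\dots,B_m)$, $\mathbf{Q}=(Q_1,\dots,Q_k)$, $\mathbf{B}\le\mathbf{Q}$ means $1\le m\le k$ and there is an injective $\sigma:\{1,\dots,m\}\to\{1,\dots,k\}$ with $B_i\subseteq Q_{\sigma(i)}$. An $\mathcal{F}$-partition is a vector of pairwise disjoint members of $\mathcal{F}$ whose union is $S$. $\mathit{class}_k(\mathcal{F})$: classification problems of length $k$ with $\mathbf{A}\le\mathbf{Q}$ for some $\mathcal{F}$-partition $\mathbf{Q}$ of length $k$ (for $k=2$, $(C,A_i)\in\mathit{class}_2(\mathcal{F})$ requires in particular $C$ infinite). For $k>1$, $\mathit{core}_k(\mathcal{F})$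 is the set of classification problems $\mathbf{A}$ of length $k$ (in particular with infinite, pairwise disjoint components) such that every classification problem $\mathbf{A}'\le\mathbf{A}$ with $|\mathbf{A}'|>1$ satisfies $\mathbf{A}'\notin\mathit{class}_{|\mathbf{A}'|}(\mathcal{F})$. A set $A\subseteq S$ is $\mathcal{F}$-cohesive if $A$ is infinite and for every $Q$ with $Q\in\mathcal{F}$ and $S\setminus Q\in\mathcal{F}$, either $A\cap Q$ or $A\setminus Q$ is finite. *)

theory Defs
  imports Main "HOL-Library.Countable_Set"
begin

text \<open>Vectors of sets (A_1,...,A_k) are represented as lists; index i (1-based in the
paper) corresponds to list position i-1.\<close>

definition nontrivial :: "'a set \<Rightarrow> 'a set set \<Rightarrow> bool" where
  "nontrivial S F \<longleftrightarrow> {} \<in> F \<and> S \<in> F \<and>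
     (\<forall>Q\<in>F. \<forall>E. finite E \<and> E \<subseteq> S \<longrightarrow> Q \<union> E \<in> F \<and> Q - E \<in> F)"

definition closed_un_int :: "'a set set \<Rightarrow> bool" where
  "closed_un_int F \<longleftrightarrow> (\<forall>P\<in>F. \<forall>Q\<in>F. P \<union> Q \<in> F \<and> P \<inter> Q \<in> F)"

definition classification_problem :: "'a set \<Rightarrow> 'a set list \<Rightarrow> bool" where
  "classification_problem S A \<longleftrightarrow> length A \<ge> 1 \<and>
     (\<forall>i<length A. A ! i \<subseteq> S \<and> infinite (A ! i)) \<and>
     (\<forall>i<length A. \<forall>j<length A. i \<noteq> j \<longrightarrow> A ! i \<inter> A ! j = {})"

definition vec_le :: "'a set list \<Rightarrow> 'a set list \<Rightarrow> bool" where
  "vec_le B Q \<longleftrightarrow> 1 \<le> length B \<and> length B \<le> length Q \<and>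
     (\<exists>\<sigma>. inj_on \<sigma> {..<length B} \<and> \<sigma> ` {..<length B} \<subseteq> {..<length Q} \<and>
          (\<forall>i<length B. B ! i \<subseteq> Q ! (\<sigma> i)))"

definition F_partition :: "'a set \<Rightarrow> 'a set set \<Rightarrow> 'a set list \<Rightarrow> bool" where
  "F_partition S F Q \<longleftrightarrow> (\<forall>i<length Q. Q ! i \<in> F) \<and>
     (\<forall>i<length Q. \<forall>j<length Q. i \<noteq> j \<longrightarrow> Q ! i \<inter> Q ! j = {}) \<and>
     \<Union>(set Q) = S"

definition class_k :: "'a set \<Rightarrow> 'a set set \<Rightarrow> nat \<Rightarrow> 'a set list \<Rightarrow> bool" where
  "class_k S F k A \<longleftrightarrow> classification_problem S A \<and> length A = k \<and>
     (\<exists>Q. F_partition S F Q \<and> length Q = k \<and> vec_le A Q)"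

definition core_k :: "'a set \<Rightarrow> 'a set set \<Rightarrow> nat \<Rightarrow> 'a set list \<Rightarrow> bool" where
  "core_k S F k A \<longleftrightarrow> k > 1 \<and> classification_problem S A \<and> length A = k \<and>
     (\<forall>A'. classification_problem S A' \<and> vec_le A' A \<and> length A' > 1 \<longrightarrow>
           \<not> class_k S F (length A') A')"

definition F_cohesive :: "'a set \<Rightarrow> 'a set set \<Rightarrow> 'a set \<Rightarrow> bool" where
  "F_cohesive S F A \<longleftrightarrow> infinite A \<and>
     (\<forall>Q. Q \<in> F \<and> S - Q \<in> F \<longrightarrow> finite (A \<inter> Q) \<or> finite (A - Q))"

end

theory Submission
  imports Defs
begin

primrec gseq :: "(nat \<Rightarrow> 'a set) \<Rightarrow> nat \<Rightarrow> 'a list" where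
  "gseq X 0 = []"
| "gseq X (Suc n) = (SOME x. x \<in> X n \<and> x \<notin> set (gseq X n)) # gseq X n"

lemma seq_choice:
  assumes inf: "\<And>n. infinite (X n)" and dec: "\<And>n. X (Suc n) \<subseteq> X n"
  shows "\<exists>B. infinite B \<and> B \<subseteq> X 0 \<and> (\<forall>n. finite (B - X n))"
proof -
  define sel where "sel j = (SOME x. x \<in> X j \<and> x \<notin> set (gseq X j))" for j
  have gs: "set (gseq X m) = sel ` {..<m}" for m
    by (induction m) (auto simp: sel_def lessThan_Suc)
  have selp: "sel m \<in> X m \<and> sel m \<notin> set (gseq X m)" for m
  proof -
    have "\<exists>x. x \<in> X m \<and> x \<notin> set (gseq X m)"
      using inf[of m] by (metis List.finite_set finite_subset subsetI)
    then show ?thesis unfolding sel_def by (rule someI_ex)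
  qed
  have mono: "n \<le> m \<Longrightarrow> X m \<subseteq> X n" for n m
    using dec by (rule lift_Suc_antimono_le)
  have "inj sel"
  proof (rule injI)
    fix a b assume "sel a = sel b"
    show "a = b"
    proof (rule ccontr)
      assume "a \<noteq> b"
      then consider "a < b" | "b < a" by linarith
      then show False
        using selp[of a] selp[of b] gs[of a] gs[of b] \<open>sel a = sel b\<close> by cases (metis imageI lessThan_iff)+
    qed
  qed
  then have "infinite (range sel)" using finite_imageD by blast
  moreover have "range sel \<subseteq> X 0" using selp mono by blast
  moreover have "finite (range sel - X n)" for n
  proof -
    have "range sel - X n \<subseteq> sel ` {..<n}"
    proof
      fix x assume "x \<in> range sel - X n"
      then obtain j where j: "x = sel j" "x \<notin> X n" by auto
      have "\<not> n \<le> j" using j selp[of j] mono[of n j] by auto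
      then show "x \<in> sel ` {..<n}" using j by auto
    qed
    then show ?thesis by (rule finite_subset) simp
  qed
  ultimately show ?thesis by blast
qed

lemma fin_union_F:
  assumes "closed_un_int F" "{} \<in> F" "finite X" "X \<subseteq> F"
  shows "\<Union>X \<in> F"
  using assms(3,4)
proof (induction X rule: finite_induct)
  case empty then show ?case using assms(2) by simp
next
  case (insert x X) then show ?case using assms(1) unfolding closed_un_int_def by auto
qed

theorem theorem3p8:
  fixes S :: "'a set" and F :: "'a set set" and A :: "'a set list" and C :: "'a set" and k :: nat
  assumes "infinite S"
    and "F \<subseteq> Pow S"
    and "countable F"
    and "nontrivial S F"
    and "closed_un_int F"
    and "classification_problem S A"
    and "length A = k"
    and "k \<ge> 2"
    and "C \<subseteq> S - \<Union>(set A)"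
    and "F_cohesive S F C"
    and "\<forall>i<k. \<not> class_k S F 2 [C, A ! i]"
  shows "\<exists>B. vec_le B A \<and> length B = k \<and> core_k S F k B"
proof -
  note nt = assms(4)[unfolded nontrivial_def]
  note cl = assms(5)[unfolded closed_un_int_def]
  note cp = assms(6)[unfolded classification_problem_def]
  note coh = assms(10)[unfolded F_cohesive_def]
  have CS: "C \<subseteq> S" using assms(9) by auto
  have CA: "\<And>i. i < k \<Longrightarrow> C \<inter> A ! i = {}" using assms(9,7) by (auto simp: set_conv_nth)
  have key: "infinite (A ! i \<inter> Q)" if i: "i < k" and Q: "Q \<in> F" "S - Q \<in> F" "finite (C - Q)" for i Q
  proof
    assume fin: "finite (A ! i \<inter> Q)"
    have AiS: "A ! i \<subseteq> S" and Aiinf: "infinite (A ! i)" using cp i assms(7) by auto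
    define Q' where "Q' = (Q \<union> (C - Q)) - (A ! i \<inter> Q)"
    have "Q \<union> (C - Q) \<in> F" using nt Q CS by blast
    then have Q'F: "Q' \<in> F" unfolding Q'_def using nt fin AiS by blast
    have eq: "S - Q' = ((S - Q) - (C - Q)) \<union> (A ! i \<inter> Q)"
      unfolding Q'_def using AiS by auto
    have "(S - Q) - (C - Q) \<in> F" using nt Q CS by blast
    then have Q'cF: "S - Q' \<in> F" unfolding eq using nt fin AiS by blast
    have "class_k S F 2 [C, A ! i]"
      unfolding class_k_def
    proof (intro conjI exI)
      show "classification_problem S [C, A ! i]"
        unfolding classification_problem_def using CS AiS Aiinf coh CA[OF i]
        by (auto simp: less_Suc_eq nth_Cons' Int_commute)
      show "F_partition S F [Q', S - Q']"
        unfolding F_partition_def using Q'F Q'cF assms(2) by (auto simp: less_Suc_eq)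
      show "vec_le [C, A ! i] [Q', S - Q']"
        unfolding vec_le_def
      proof (intro conjI exI)
        show "inj_on id {..<length [C, A ! i]}" by simp
        show "\<forall>j<length [C, A ! i]. [C, A ! i] ! j \<subseteq> [Q', S - Q'] ! id j"
          using CS AiS CA[OF i] by (auto simp: less_Suc_eq Q'_def)
      qed auto
    qed auto
    then show False using assms(11) i by blast
  qed
  define U where "U = {Q. Q \<in> F \<and> S - Q \<in> F \<and> finite (C - Q)}"
  have CSe: "C - S = {}" using CS by blast
  have SU: "S \<in> U" unfolding U_def using nt by (simp add: CSe)
  have cU: "countable U" unfolding U_def using assms(3) by (rule countable_subset[rotated]) auto
  define f where "f = from_nat_into U"
  have rf: "range f = U" unfolding f_def using SU cU by (intro range_from_nat_into) auto
  define P where "P n = (\<Inter>j\<le>n. f j)" for n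
  have PU: "P n \<in> U" for n
  proof (induction n)
    case 0 then show ?case using rf by (auto simp: P_def)
  next
    case (Suc n)
    have eq: "P (Suc n) = P n \<inter> f (Suc n)" unfolding P_def by (auto simp: atMost_Suc)
    have "f (Suc n) \<in> U" using rf by auto
    then show ?case using Suc unfolding eq U_def using cl
      by (auto simp: Diff_Int) 
  qed
  have Pdec: "P (Suc n) \<subseteq> P n" for n unfolding P_def by (auto simp: atMost_Suc)
  have "\<forall>i<k. \<exists>Bi. infinite Bi \<and> Bi \<subseteq> A ! i \<and> (\<forall>n. finite (Bi - P n))"
  proof (intro allI impI)
    fix i assume i: "i < k"
    have "\<exists>Bi. infinite Bi \<and> Bi \<subseteq> A ! i \<inter> P 0 \<and> (\<forall>n. finite (Bi - (A ! i \<inter> P n)))"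
      by (rule seq_choice) (use key[OF i] PU Pdec in \<open>auto simp: U_def\<close>)
    then obtain Bi where Bi: "infinite Bi" "Bi \<subseteq> A ! i \<inter> P 0" "\<forall>n. finite (Bi - (A ! i \<inter> P n))"
      by blast
    have "Bi - P n = Bi - (A ! i \<inter> P n)" for n using Bi(2) by blast
    then show "\<exists>Bi. infinite Bi \<and> Bi \<subseteq> A ! i \<and> (\<forall>n. finite (Bi - P n))"
      using Bi by auto
  qed
  then obtain bf where bf: "\<And>i. i < k \<Longrightarrow> infinite (bf i) \<and> bf i \<subseteq> A ! i \<and> (\<forall>n. finite (bf i - P n))"
    by metis
  have dich: "(\<forall>i<k. finite (bf i - R)) \<or> (\<forall>i<k. finite (bf i \<inter> R))"
    if R: "R \<in> F" "S - R \<in> F" for R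
  proof (cases "finite (C - R)")
    case True
    then have "R \<in> U" unfolding U_def using R by auto
    then obtain n where n: "R = f n" using rf by auto
    have "P n \<subseteq> R" unfolding P_def n by auto
    then have "\<forall>i<k. finite (bf i - R)" using bf by (meson Diff_mono finite_subset order_refl)
    then show ?thesis by blast
  next
    case False
    then have "finite (C \<inter> R)" using coh R by blast
    moreover have "S - (S - R) = R" using R assms(2) by auto
    moreover have "C - (S - R) = C \<inter> R" using CS by auto
    ultimately have "S - R \<in> U" unfolding U_def using R by auto
    then obtain n where n: "S - R = f n" using rf by auto
    have "P n \<subseteq> S - R" unfolding P_def n by auto
    then have "\<forall>i<k. finite (bf i - (S - R))" using bf by (meson Diff_mono finite_subset order_refl)
    moreover have "\<forall>i<k. bf i - (S - R) = bf i \<inter> R" using bf cp assms(7) by blast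
    ultimately show ?thesis by auto
  qed
  define B where "B = map bf [0..<k]"
  have lenB: "length B = k" unfolding B_def by simp
  have Bnth: "i < k \<Longrightarrow> B ! i = bf i" for i unfolding B_def by simp
  have cpB: "classification_problem S B"
    unfolding classification_problem_def lenB
  proof (intro conjI allI impI)
    show "1 \<le> k" using assms(8) by simp
  next
    fix i assume i: "i < k"
    have "bf i \<subseteq> A ! i" "infinite (bf i)" "A ! i \<subseteq> S" using bf[OF i] cp assms(7) i by auto
    then show "B ! i \<subseteq> S" "infinite (B ! i)" using Bnth[OF i] by auto
  next
    fix i j assume "i < k" "j < k" "i \<noteq> j"
    then have "A ! i \<inter> A ! j = {}" "bf i \<subseteq> A ! i" "bf j \<subseteq> A ! j" using bf cp assms(7) by auto
    then show "B ! i \<inter> B ! j = {}" using Bnth \<open>i < k\<close> \<open>j < k\<close> by auto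
  qed
  have vBA: "vec_le B A"
    unfolding vec_le_def lenB assms(7)
  proof (intro conjI exI)
    show "inj_on id {..<k}" by simp
  qed (use assms(8) Bnth bf in auto)
  have "core_k S F k B"
    unfolding core_k_def
  proof (intro conjI allI impI)
    show "1 < k" using assms(8) by simp
    show "classification_problem S B" by (rule cpB)
    show "length B = k" by (rule lenB)
  next
    fix A' assume H: "classification_problem S A' \<and> vec_le A' B \<and> 1 < length A'"
    show "\<not> class_k S F (length A') A'"
    proof
      assume "class_k S F (length A') A'"
      then obtain Q where QP: "F_partition S F Q" and lQ: "length Q = length A'" and vQ: "vec_le A' Q"
        unfolding class_k_def by blast
      obtain \<rho> where rho: "inj_on \<rho> {..<length A'}" "\<rho> ` {..<length A'} \<subseteq> {..<length Q}"
        "\<forall>i<length A'. A' ! i \<subseteq> Q ! (\<rho> i)" using vQ unfolding vec_le_def by blast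
      obtain \<tau> where tau: "\<tau> ` {..<length A'} \<subseteq> {..<length B}"
        "\<forall>i<length A'. A' ! i \<subseteq> B ! (\<tau> i)" using H unfolding vec_le_def by blast
      have l1: "0 < length A'" "1 < length A'" using H by auto
      have r01: "\<rho> 0 \<noteq> \<rho> 1" using rho(1) l1 unfolding inj_on_def by force
      have r0: "\<rho> 0 < length Q" and r1: "\<rho> 1 < length Q" using rho(2) l1 by auto
      have t0: "\<tau> 0 < k" and t1: "\<tau> 1 < k" using tau(1) l1 lenB by auto
      define R where "R = Q ! \<rho> 0"
      have QF: "\<forall>i<length Q. Q ! i \<in> F" and Qd: "\<forall>i<length Q. \<forall>j<length Q. i \<noteq> j \<longrightarrow> Q ! i \<inter> Q ! j = {}"
        and QU: "\<Union>(set Q) = S" using QP unfolding F_partition_def by auto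
      have RF: "R \<in> F" unfolding R_def using QF r0 by blast
      have eqc: "S - R = \<Union>((\<lambda>l. Q ! l) ` ({..<length Q} - {\<rho> 0}))"
      proof
        show "S - R \<subseteq> \<Union>((\<lambda>l. Q ! l) ` ({..<length Q} - {\<rho> 0}))"
          using QU unfolding R_def by (auto simp: in_set_conv_nth)
        show "\<Union>((\<lambda>l. Q ! l) ` ({..<length Q} - {\<rho> 0})) \<subseteq> S - R"
          using QU Qd r0 unfolding R_def by (fastforce simp: in_set_conv_nth)
      qed
      have RcF: "S - R \<in> F" unfolding eqc
        by (rule fin_union_F) (use assms(5) nt QF in auto)
      have a0: "A' ! 0 \<subseteq> B ! \<tau> 0" "A' ! 0 \<subseteq> Q ! \<rho> 0" using tau(2) rho(3) l1 by auto
      have a1: "A' ! 1 \<subseteq> B ! \<tau> 1" "A' ! 1 \<subseteq> Q ! \<rho> 1" using tau(2) rho(3) l1 by auto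
      have dis: "Q ! \<rho> 1 \<inter> R = {}" using Qd r0 r1 r01 unfolding R_def by blast
      have A0: "A' ! 0 \<subseteq> bf (\<tau> 0) \<inter> R" using a0 Bnth[OF t0] unfolding R_def by auto
      have A1: "A' ! 1 \<subseteq> bf (\<tau> 1) - R" using a1 Bnth[OF t1] dis by auto
      have inf0: "infinite (A' ! 0)" and inf1: "infinite (A' ! 1)"
        using H l1 unfolding classification_problem_def by auto
      from dich[OF RF RcF] show False
        using A0 A1 inf0 inf1 t0 t1 finite_subset by blast
    qed
  qed
  then show ?thesis using vBA lenB by blast
qed

end
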